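(* Let $\xi$ be a model and let $\phi$ be the unique minimizer of $P_{0,\xi}$ on $\mathcal{C}$. Then $\phi$ is constant on $[0,1]$ if and only if $\xi(t)=a t^2$ for some $a>0$ (i.e. $\xi=\xi_{SK}$).
   Context: A model is $\xi(t)=\sum_{p\ge2}\beta_p^2t^p$, real $\beta_p$ not all zero, with $\xi(1+\epsilon)<\infty$ for some $\epsilon>0$; $\xi_{SK}$ denotes a model with only the $p=2$ term, $\xi(t)=\beta_2^2t^2$. $\mathcal{C}$ is the set of $\phi\in C([0,1])$ with $\phi\ge0$, non-increasing and concave, and $P_{0,\xi}(\phi)=\int_0^1\big(\xi''(x)\phi(x)+\frac1{\phi(x)}\big)dx$. *)

theory Defs
  imports "HOL-Analysis.Analysis"
begin

definition is_model :: "(nat \<Rightarrow> real) \<Rightarrow> bool" where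
  "is_model \<beta> \<longleftrightarrow> (\<exists>p\<ge>2. \<beta> p \<noteq> 0) \<and>
     (\<exists>\<epsilon>>0. summable (\<lambda>p. if p \<ge> 2 then (\<beta> p)^2 * (1 + \<epsilon>)^p else 0))"

definition xi :: "(nat \<Rightarrow> real) \<Rightarrow> real \<Rightarrow> real" where
  "xi \<beta> t = (\<Sum>p. if p \<ge> 2 then (\<beta> p)^2 * t^p else 0)"

definition classC :: "(real \<Rightarrow> real) set" where
  "classC = {\<phi>. continuous_on {0..1} \<phi> \<and> (\<forall>x\<in>{0..1}. 0 \<le> \<phi> x) \<and>
              antimono_on {0..1} \<phi> \<and> concave_on {0..1} \<phi>}"

text \<open>P_{0,xi}(phi) as an extended nonnegative real; 1/phi(x) is read as +infinity where phi(x)=0.\<close>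
definition P0 :: "(nat \<Rightarrow> real) \<Rightarrow> (real \<Rightarrow> real) \<Rightarrow> ennreal" where
  "P0 \<beta> \<phi> = (\<integral>\<^sup>+ x \<in> {0..1}.
      ennreal (deriv (deriv (xi \<beta>)) x * \<phi> x) + (if \<phi> x = 0 then \<infinity> else ennreal (1 / \<phi> x)) \<partial>lborel)"

definition is_minimizer :: "(nat \<Rightarrow> real) \<Rightarrow> (real \<Rightarrow> real) \<Rightarrow> bool" where
  "is_minimizer \<beta> \<phi> \<longleftrightarrow> \<phi> \<in> classC \<and> (\<forall>\<psi>\<in>classC. P0 \<beta> \<phi> \<le> P0 \<beta> \<psi>)"

end

theory Submission
  imports Defs
begin



definition cf :: "(nat \<Rightarrow> real) \<Rightarrow> nat \<Rightarrow> real" where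
  "cf \<beta> p = (if p \<ge> 2 then (\<beta> p)^2 else 0)"

definition S0 :: "(nat \<Rightarrow> real) \<Rightarrow> real \<Rightarrow> real" where "S0 \<beta> x = (\<Sum>n. cf \<beta> n * x^n)"
definition S1 :: "(nat \<Rightarrow> real) \<Rightarrow> real \<Rightarrow> real" where "S1 \<beta> x = (\<Sum>n. diffs (cf \<beta>) n * x^n)"
definition S2 :: "(nat \<Rightarrow> real) \<Rightarrow> real \<Rightarrow> real" where "S2 \<beta> x = (\<Sum>n. diffs (diffs (cf \<beta>)) n * x^n)"

lemma xi_S0: "xi \<beta> = S0 \<beta>"
  unfolding xi_def S0_def cf_def by (intro ext arg_cong[where f=suminf]) auto

lemma model_K:
  assumes "is_model \<beta>"
  obtains K :: real where "K > 1" "\<And>z::real. \<bar>z\<bar> < K \<Longrightarrow> summable (\<lambda>n. cf \<beta> n * z^n)"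
proof -
  obtain e where e: "e > 0" "summable (\<lambda>p. if p \<ge> 2 then (\<beta> p)^2 * (1 + e)^p else 0)"
    using assms unfolding is_model_def by blast
  have s: "summable (\<lambda>n. cf \<beta> n * (1+e)^n)"
    using e(2) by (rule back_subst[where P=summable]) (auto simp: cf_def fun_eq_iff)
  show ?thesis
  proof (rule that[of "1+e"])
    show "1 < 1 + e" using e by simp
    fix z :: real assume "\<bar>z\<bar> < 1 + e"
    then show "summable (\<lambda>n. cf \<beta> n * z^n)"
      using powser_inside[OF s, of z] e by simp
  qed
qed

lemma derivs:
  assumes K: "\<And>z::real. \<bar>z\<bar> < K \<Longrightarrow> summable (\<lambda>n. cf \<beta> n * z^n)" and x: "\<bar>x\<bar> < K"
  shows "DERIV (S0 \<beta>) x :> S1 \<beta> x" "DERIV (S1 \<beta>) x :> S2 \<beta> x"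
    "deriv (S0 \<beta>) x = S1 \<beta> x" "deriv (deriv (S0 \<beta>)) x = S2 \<beta> x"
proof -
  have K1: "\<And>z::real. norm z < K \<Longrightarrow> summable (\<lambda>n. diffs (cf \<beta>) n * z^n)"
    by (rule termdiff_converges[where K=K]) (use K in auto)
  have d0: "DERIV (S0 \<beta>) y :> S1 \<beta> y" if "\<bar>y\<bar> < K" for y
    unfolding S0_def S1_def by (rule termdiffs_strong') (use K that in auto)
  have d1: "DERIV (S1 \<beta>) y :> S2 \<beta> y" if "\<bar>y\<bar> < K" for y
    unfolding S1_def S2_def by (rule termdiffs_strong') (use K1 that in auto)
  show "DERIV (S0 \<beta>) x :> S1 \<beta> x" "DERIV (S1 \<beta>) x :> S2 \<beta> x"
    using d0 d1 x by auto
  show "deriv (S0 \<beta>) x = S1 \<beta> x" using d0[OF x] by (rule DERIV_imp_deriv)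
  have ev: "eventually (\<lambda>y. y \<in> {-K<..<K}) (nhds x)"
    by (rule eventually_nhds_in_open) (use x in auto)
  have ev2: "eventually (\<lambda>y. deriv (S0 \<beta>) y = S1 \<beta> y) (nhds x)"
    using ev by eventually_elim (rule DERIV_imp_deriv, rule d0, auto)
  have "DERIV (deriv (S0 \<beta>)) x :> S2 \<beta> x"
    using DERIV_cong_ev[OF refl ev2 refl] d1[OF x] by simp
  then show "deriv (deriv (S0 \<beta>)) x = S2 \<beta> x" by (rule DERIV_imp_deriv)
qed




lemma S2_nonneg:
  assumes K: "\<And>z::real. \<bar>z\<bar> < K \<Longrightarrow> summable (\<lambda>n. cf \<beta> n * z^n)" and x: "\<bar>x\<bar> < K" "x \<ge> 0"
  shows "S2 \<beta> x \<ge> 0"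
proof -
  have K1: "\<And>z::real. norm z < K \<Longrightarrow> summable (\<lambda>n. diffs (cf \<beta>) n * z^n)"
    by (rule termdiff_converges[where K=K]) (use K in auto)
  have K2: "summable (\<lambda>n. diffs (diffs (cf \<beta>)) n * x^n)"
    by (rule termdiff_converges[where K=K]) (use K1 x in auto)
  show ?thesis unfolding S2_def
    by (rule suminf_nonneg[OF K2]) (use x in \<open>auto simp: diffs_def cf_def\<close>)
qed

lemma S_zero: "S0 \<beta> 0 = 0" "S1 \<beta> 0 = 0"
  unfolding S0_def S1_def powser_zero by (auto simp: diffs_def cf_def)

lemma S_integrals:
  assumes K: "\<And>z::real. \<bar>z\<bar> < K \<Longrightarrow> summable (\<lambda>n. cf \<beta> n * z^n)" and K1: "K > 1"
  shows "(S2 \<beta> has_integral (S1 \<beta> 1)) {0..1}"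
    "((\<lambda>x. S2 \<beta> x * x) has_integral (S1 \<beta> 1 - S0 \<beta> 1)) {0..1}"
proof -
  have xK: "\<bar>x\<bar> < K" if "x \<in> {0..1}" for x::real using that K1 by auto
  have "(S2 \<beta> has_integral (S1 \<beta> 1 - S1 \<beta> 0)) {0..1}"
  proof (rule fundamental_theorem_of_calculus)
    fix x :: real assume x: "x \<in> {0..1}"
    have "DERIV (S1 \<beta>) x :> S2 \<beta> x" by (rule derivs(2)[OF K xK[OF x]])
    then show "(S1 \<beta> has_vector_derivative S2 \<beta> x) (at x within {0..1})"
      unfolding has_real_derivative_iff_has_vector_derivative[symmetric]
      by (rule has_field_derivative_at_within)
  qed simp
  then show "(S2 \<beta> has_integral (S1 \<beta> 1)) {0..1}" by (simp add: S_zero)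
  have "((\<lambda>x. S2 \<beta> x * x) has_integral ((\<lambda>x. x * S1 \<beta> x - S0 \<beta> x) 1 - (\<lambda>x. x * S1 \<beta> x - S0 \<beta> x) 0)) {0..1}"
  proof (rule fundamental_theorem_of_calculus)
    fix x :: real assume x: "x \<in> {0..1}"
    have "((\<lambda>x. x * S1 \<beta> x - S0 \<beta> x) has_real_derivative (S2 \<beta> x * x)) (at x)"
    proof -
      have xk: "\<bar>x\<bar> < K" using xK[OF x] .
      have d1: "DERIV (S1 \<beta>) x :> S2 \<beta> x" using derivs(2)[OF K xk] .
      have d0: "DERIV (S0 \<beta>) x :> S1 \<beta> x" using derivs(1)[OF K xk] .
      have "((\<lambda>x. x * S1 \<beta> x - S0 \<beta> x) has_real_derivative (1 * S1 \<beta> x + S2 \<beta> x * x - S1 \<beta> x)) (at x)"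
        by (intro DERIV_diff DERIV_mult d0 d1 DERIV_ident)
      then show ?thesis by (simp add: algebra_simps)
    qed
    then show "((\<lambda>x. x * S1 \<beta> x - S0 \<beta> x) has_vector_derivative S2 \<beta> x * x) (at x within {0..1})"
      unfolding has_real_derivative_iff_has_vector_derivative[symmetric]
      by (rule has_field_derivative_at_within)
  qed simp
  then show "((\<lambda>x. S2 \<beta> x * x) has_integral (S1 \<beta> 1 - S0 \<beta> 1)) {0..1}" by (simp add: S_zero)
qed

lemma final_arith:
  assumes K: "\<And>z::real. \<bar>z\<bar> < K \<Longrightarrow> summable (\<lambda>n. cf \<beta> n * z^n)" and K1: "K > 1"
    and le: "S1 \<beta> 1 \<le> 2 * S0 \<beta> 1"
  shows "\<forall>n\<ge>3. \<beta> n = 0"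
proof -
  have K1': "\<And>z::real. norm z < K \<Longrightarrow> summable (\<lambda>n. diffs (cf \<beta>) n * z^n)"
    by (rule termdiff_converges[where K=K]) (use K in auto)
  have s0: "cf \<beta> sums S0 \<beta> 1"
    using K[of 1] K1 unfolding S0_def by (simp add: summable_sums)
  have "diffs (cf \<beta>) sums S1 \<beta> 1"
    using K1'[of 1] K1 unfolding S1_def by (simp add: summable_sums)
  then have "(\<lambda>n. (\<lambda>n. real n * cf \<beta> n) (Suc n)) sums S1 \<beta> 1"
    by (simp add: diffs_def)
  then have s1: "(\<lambda>n. real n * cf \<beta> n) sums S1 \<beta> 1"
    by (subst (asm) sums_Suc_iff) simp
  have s: "(\<lambda>n. real n * cf \<beta> n - 2 * cf \<beta> n) sums (S1 \<beta> 1 - 2 * S0 \<beta> 1)"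
    by (intro sums_diff s1 sums_mult s0)
  have nn: "\<forall>n. 0 \<le> real n * cf \<beta> n - 2 * cf \<beta> n"
  proof
    fix n show "0 \<le> real n * cf \<beta> n - 2 * cf \<beta> n"
      by (cases "n \<ge> 2") (auto simp: cf_def algebra_simps intro!: mult_right_mono)
  qed
  have "S1 \<beta> 1 - 2 * S0 \<beta> 1 \<ge> 0"
    by (rule sums_le[OF _ sums_zero s]) (use nn in auto)
  with le have "S1 \<beta> 1 - 2 * S0 \<beta> 1 = 0" by simp
  with s have "suminf (\<lambda>n. real n * cf \<beta> n - 2 * cf \<beta> n) = 0"
    using sums_unique by metis
  then have z: "\<forall>n. real n * cf \<beta> n - 2 * cf \<beta> n = 0"
    using suminf_eq_zero_iff[OF sums_summable[OF s] nn[rule_format]] by simp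
  show ?thesis
  proof (intro allI impI)
    fix n :: nat assume n: "n \<ge> 3"
    have "(real n - 2) * cf \<beta> n = 0" using z[rule_format, of n] by (simp add: algebra_simps)
    moreover have "real n - 2 \<noteq> 0" using n by simp
    ultimately have "cf \<beta> n = 0" by simp
    then show "\<beta> n = 0" using n by (simp add: cf_def)
  qed
qed




lemma affine_classC:
  fixes \<alpha> \<gamma> :: real
  assumes "\<gamma> \<le> 0" "\<alpha> + \<gamma> \<ge> 0"
  shows "(\<lambda>x. \<alpha> + \<gamma> * x) \<in> classC"
  unfolding classC_def
proof (intro CollectI conjI ballI)
  show "continuous_on {0..1} (\<lambda>x. \<alpha> + \<gamma> * x)" by (intro continuous_intros)
  fix x :: real assume x: "x \<in> {0..1}"
  have "\<gamma> * x \<ge> \<gamma> * 1" using x assms by (intro mult_left_mono_neg) auto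
  then show "0 \<le> \<alpha> + \<gamma> * x" using assms by simp
next
  show "antimono_on {0..1} (\<lambda>x. \<alpha> + \<gamma> * x)"
    by (auto simp: monotone_on_def intro!: mult_left_mono_neg assms)
  show "concave_on {0..1} (\<lambda>x. \<alpha> + \<gamma> * x)"
  proof (unfold concave_on_iff, intro conjI ballI allI impI)
    show "convex {0..1::real}" by simp
    fix x y u v :: real assume "u + v = 1"
    then have v: "v = 1 - u" by simp
    show "u * (\<alpha> + \<gamma> * x) + v * (\<alpha> + \<gamma> * y) \<le> \<alpha> + \<gamma> * (u *\<^sub>R x + v *\<^sub>R y)"
      unfolding v by (simp add: algebra_simps)
  qed
qed

lemma const_classC: "c \<ge> 0 \<Longrightarrow> (\<lambda>x. c::real) \<in> classC"
  using affine_classC[of 0 c] by simp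

lemma const01: "((\<lambda>x::real. k) has_integral k) {0..1}"
  using has_integral_const_real[of k 0 "1::real"] by simp

lemma P0_alt: "P0 \<beta> \<phi> = (\<integral>\<^sup>+ x. (ennreal (deriv (deriv (xi \<beta>)) x * \<phi> x) + (if \<phi> x = 0 then \<infinity> else ennreal (1 / \<phi> x))) * indicator {0..1} x \<partial>lborel)"
  unfolding P0_def by simp

lemma P0_const:
  fixes c A :: real
  assumes c: "c > 0" and phi: "\<forall>x\<in>{0..1}. \<phi> x = c"
    and Gnn: "\<forall>x\<in>{0..1}. deriv (deriv (xi \<beta>)) x \<ge> 0"
    and GA: "(deriv (deriv (xi \<beta>)) has_integral A) {0..1}"
  shows "P0 \<beta> \<phi> = ennreal (c * A + 1 / c)"
proof -
  let ?G = "deriv (deriv (xi \<beta>))"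
  have "P0 \<beta> \<phi> = (\<integral>\<^sup>+ x. ennreal (indicator {0..1} x * (?G x * c + 1 / c)) \<partial>lborel)"
    unfolding P0_alt
  proof (intro nn_integral_cong)
    fix x :: real
    show "(ennreal (?G x * \<phi> x) + (if \<phi> x = 0 then \<infinity> else ennreal (1 / \<phi> x))) * indicator {0..1} x
        = ennreal (indicator {0..1} x * (?G x * c + 1 / c))"
    proof (cases "x \<in> {0..1}")
      case True
      then have px: "\<phi> x = c" using phi by simp
      have g: "?G x * c \<ge> 0" using Gnn True c by simp
      have ifeq: "(if \<phi> x = 0 then \<infinity> else ennreal (1 / \<phi> x)) = ennreal (1 / c)"
        using px c by simp
      show ?thesis unfolding ifeq px using True g c by (simp add: ennreal_plus)
    next
      case False
      then show ?thesis by simp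
    qed
  qed
  also have "\<dots> = ennreal (c * A + 1 / c)"
  proof (rule nn_integral_has_integral_lebesgue)
    show "\<And>x. x \<in> {0..1} \<Longrightarrow> 0 \<le> ?G x * c + 1 / c" using Gnn c by simp
    have "((\<lambda>x. c * ?G x + 1 / c) has_integral (c * A + 1 / c)) {0..1}"
      by (intro has_integral_add has_integral_mult_right GA const01)
    then show "((\<lambda>x. ?G x * c + 1 / c) has_integral (c * A + 1 / c)) {0..1}"
      by (simp add: mult.commute)
  qed
  finally show ?thesis .
qed




lemma recip_bound:
  fixes u s :: real
  assumes "\<bar>u\<bar> \<le> s" "s \<le> 1/2"
  shows "1 / (1 + u) \<le> 1 - u + 2 * s^2"
proof -
  have u: "u \<ge> -1/2" "1 + u > 0" using assms by auto
  have "u^2 \<le> s^2" using assms by (metis abs_le_square_iff abs_of_nonneg abs_ge_zero order_trans)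
  have "1 \<le> (1 - u + 2 * u^2) * (1 + u)"
  proof -
    have "(1 - u + 2 * u^2) * (1 + u) = 1 + u^2 * (1 + 2*u)" by (simp add: algebra_simps power2_eq_square)
    moreover have "u^2 * (1 + 2*u) \<ge> 0" using u by simp
    ultimately show ?thesis by simp
  qed
  then have "1 / (1 + u) \<le> 1 - u + 2 * u^2" using u by (simp add: divide_le_eq)
  also have "\<dots> \<le> 1 - u + 2 * s^2" using \<open>u^2 \<le> s^2\<close> by simp
  finally show ?thesis .
qed

lemma P0_upper:
  fixes c A B s \<sigma> \<tau> :: real
  assumes c: "c > 0" and s: "0 < s" "s \<le> 1/2" and st: "\<bar>\<sigma>\<bar> + \<bar>\<tau>\<bar> \<le> 1"
    and Gnn: "\<forall>x\<in>{0..1}. deriv (deriv (xi \<beta>)) x \<ge> 0"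
    and GA: "(deriv (deriv (xi \<beta>)) has_integral A) {0..1}"
    and GB: "((\<lambda>x. deriv (deriv (xi \<beta>)) x * x) has_integral B) {0..1}"
  shows "P0 \<beta> (\<lambda>x. c * (1 + s * (\<sigma> + \<tau> * x))) \<le>
     ennreal (c * A + 1 / c + s * (c * (\<sigma> * A + \<tau> * B) - (\<sigma> + \<tau> / 2) / c) + 2 * s^2 / c)"
proof -
  let ?G = "deriv (deriv (xi \<beta>))"
  let ?\<psi> = "\<lambda>x. c * (1 + s * (\<sigma> + \<tau> * x))"
  define b where "b x = ?G x * ?\<psi> x + (1 / c) * (1 - s * (\<sigma> + \<tau> * x) + 2 * s^2)" for x
  have hb: "\<bar>\<sigma> + \<tau> * x\<bar> \<le> 1" if "x \<in> {0..1}" for x :: real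
  proof -
    have "\<bar>\<tau> * x\<bar> \<le> \<bar>\<tau>\<bar>" using that by (auto simp: abs_mult intro: mult_left_le)
    then show ?thesis using st by (smt (verit))
  qed
  have ub: "\<bar>s * (\<sigma> + \<tau> * x)\<bar> \<le> s" if "x \<in> {0..1}" for x :: real
    using hb[OF that] s by (auto simp: abs_mult intro: mult_left_le)
  have psipos: "?\<psi> x > 0" if "x \<in> {0..1}" for x :: real
  proof -
    have "- s \<le> s * (\<sigma> + \<tau> * x)" using ub[OF that] by (simp add: abs_le_iff)
    then have "1 + s * (\<sigma> + \<tau> * x) > 0" using s by linarith
    then show ?thesis using c by simp
  qed
  have P: "P0 \<beta> ?\<psi> \<le> (\<integral>\<^sup>+ x. ennreal (indicator {0..1} x * b x) \<partial>lborel)"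
    unfolding P0_alt
  proof (intro nn_integral_mono)
    fix x :: real
    show "(ennreal (?G x * ?\<psi> x) + (if ?\<psi> x = 0 then \<infinity> else ennreal (1 / ?\<psi> x))) * indicator {0..1} x
        \<le> ennreal (indicator {0..1} x * b x)"
    proof (cases "x \<in> {0..1}")
      case True
      have p: "?\<psi> x > 0" using psipos[OF True] .
      have r: "1 / (1 + s * (\<sigma> + \<tau> * x)) \<le> 1 - s * (\<sigma> + \<tau> * x) + 2 * s^2"
        by (rule recip_bound[OF ub[OF True] s(2)])
      have "1 / ?\<psi> x = (1 / c) * (1 / (1 + s * (\<sigma> + \<tau> * x)))" by simp
      also have "\<dots> \<le> (1 / c) * (1 - s * (\<sigma> + \<tau> * x) + 2 * s^2)"
        using r c by (intro mult_left_mono) auto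
      finally have r2: "1 / ?\<psi> x \<le> (1 / c) * (1 - s * (\<sigma> + \<tau> * x) + 2 * s^2)" .
      have g: "?G x * ?\<psi> x \<ge> 0" using Gnn True p by simp
      have "ennreal (?G x * ?\<psi> x) + ennreal (1 / ?\<psi> x) = ennreal (?G x * ?\<psi> x + 1 / ?\<psi> x)"
        using g p by (simp add: ennreal_plus)
      also have "\<dots> \<le> ennreal (b x)" unfolding b_def using r2 by (intro ennreal_leI) simp
      finally have fin: "ennreal (?G x * ?\<psi> x) + ennreal (1 / ?\<psi> x) \<le> ennreal (b x)" .
      have ne: "\<not> (?\<psi> x = 0)" using p by linarith
      have ifeq: "(if ?\<psi> x = 0 then \<infinity> else ennreal (1 / ?\<psi> x)) = ennreal (1 / ?\<psi> x)"
        using ne by (rule if_not_P)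
      show ?thesis unfolding ifeq using True fin by simp
    next
      case False
      then show ?thesis by simp
    qed
  qed
  also have "(\<integral>\<^sup>+ x. ennreal (indicator {0..1} x * b x) \<partial>lborel) =
     ennreal (c * A + 1 / c + s * (c * (\<sigma> * A + \<tau> * B) - (\<sigma> + \<tau> / 2) / c) + 2 * s^2 / c)"
  proof (rule nn_integral_has_integral_lebesgue)
    show "0 \<le> b x" if x: "x \<in> {0..1}" for x
    proof -
      have "?G x * ?\<psi> x \<ge> 0" using Gnn x psipos[OF x] by simp
      moreover have "1 - s * (\<sigma> + \<tau> * x) + 2 * s^2 \<ge> 0"
      proof -
        have "s * (\<sigma> + \<tau> * x) \<le> s" using ub[OF x] by (simp add: abs_le_iff)
        moreover have "s^2 \<ge> 0" by simp
        ultimately show ?thesis using s by linarith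
      qed
      ultimately show ?thesis unfolding b_def using c by simp
    qed
    have id: "((\<lambda>x::real. x) has_integral (1/2)) {0..1}"
    proof -
      have "((\<lambda>x::real. x) has_integral ((\<lambda>x. x^2/2) 1 - (\<lambda>x. x^2/2) 0)) {0..1}"
      proof (rule fundamental_theorem_of_calculus)
        fix x :: real
        have "((\<lambda>x::real. x^2/2) has_real_derivative x) (at x)"
          by (auto intro!: derivative_eq_intros)
        then show "((\<lambda>x::real. x^2/2) has_vector_derivative x) (at x within {0..1})"
          unfolding has_real_derivative_iff_has_vector_derivative[symmetric]
          by (rule has_field_derivative_at_within)
      qed simp
      then show ?thesis by simp
    qed
    have "((\<lambda>x. (c * (1 + s * \<sigma>)) * ?G x + (c * s * \<tau>) * (?G x * x) + (1 / c * (1 - s * \<sigma> + 2 * s^2)) - (s * \<tau> / c) * x)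
       has_integral ((c * (1 + s * \<sigma>)) * A + (c * s * \<tau>) * B + (1 / c * (1 - s * \<sigma> + 2 * s^2)) - (s * \<tau> / c) * (1/2))) {0..1}"
      by (intro has_integral_add has_integral_diff has_integral_mult_right GA GB const01 id)
    moreover have "(\<lambda>x. (c * (1 + s * \<sigma>)) * ?G x + (c * s * \<tau>) * (?G x * x) + (1 / c * (1 - s * \<sigma> + 2 * s^2)) - (s * \<tau> / c) * x) = b"
      unfolding b_def by (rule ext) (use c in \<open>simp add: field_simps\<close>)
    moreover have "(c * (1 + s * \<sigma>)) * A + (c * s * \<tau>) * B + (1 / c * (1 - s * \<sigma> + 2 * s^2)) - (s * \<tau> / c) * (1/2)
       = c * A + 1 / c + s * (c * (\<sigma> * A + \<tau> * B) - (\<sigma> + \<tau> / 2) / c) + 2 * s^2 / c"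
      using c by (simp add: field_simps)
    ultimately show "(b has_integral (c * A + 1 / c + s * (c * (\<sigma> * A + \<tau> * B) - (\<sigma> + \<tau> / 2) / c) + 2 * s^2 / c)) {0..1}"
      by simp
  qed
  finally show ?thesis .
qed




lemma ennreal_le_pos: "ennreal x \<le> ennreal y \<Longrightarrow> 0 < x \<Longrightarrow> x \<le> y"
proof (cases "0 \<le> y")
  case True
  then show "ennreal x \<le> ennreal y \<Longrightarrow> 0 < x \<Longrightarrow> x \<le> y" by simp
next
  case False
  assume a: "ennreal x \<le> ennreal y" "0 < x"
  have "ennreal y = 0" using False by (simp add: ennreal_neg)
  then have "ennreal x = 0" using a by simp
  then show "x \<le> y" using a by (simp add: ennreal_eq_0_iff)
qed

lemma small_s:
  fixes L c :: real
  assumes c: "c > 0" and h: "\<And>s. 0 < s \<Longrightarrow> s \<le> 1/2 \<Longrightarrow> 0 \<le> s * L + 2 * s^2 / c"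
  shows "L \<ge> 0"
proof (rule ccontr)
  assume "\<not> L \<ge> 0"
  then have L: "L < 0" by simp
  define s where "s = min (1/2) (- L * c / 4)"
  have s0: "s > 0" using L c by (simp add: s_def mult_neg_pos)
  have s1: "s \<le> 1/2" by (simp add: s_def)
  have "s \<le> - L * c / 4" by (simp add: s_def)
  then have "2 * s / c \<le> - L / 2" using c by (simp add: field_simps)
  then have "L + 2 * s / c < 0" using L by linarith
  then have "s * (L + 2 * s / c) < 0" using s0 by (simp add: mult_pos_neg)
  moreover have "s * (L + 2 * s / c) = s * L + 2 * s^2 / c" by (simp add: algebra_simps power2_eq_square)
  ultimately show False using h[OF s0 s1] by simp
qed

lemma forward:
  fixes \<beta> :: "nat \<Rightarrow> real" and \<phi> :: "real \<Rightarrow> real" and c :: real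
  assumes model: "is_model \<beta>" and min: "is_minimizer \<beta> \<phi>" and phic: "\<forall>x\<in>{0..1}. \<phi> x = c"
  shows "\<exists>a>0. \<forall>t. xi \<beta> t = a * t^2"
proof -
  obtain K where K1: "K > 1" and K: "\<And>z::real. \<bar>z\<bar> < K \<Longrightarrow> summable (\<lambda>n. cf \<beta> n * z^n)"
    using model_K[OF model] by blast
  let ?G = "deriv (deriv (xi \<beta>))"
  have GS: "?G x = S2 \<beta> x" if "x \<in> {0..1}" for x
  proof -
    have "\<bar>x\<bar> < K" using that K1 by auto
    then show ?thesis unfolding xi_S0 using derivs(4)[OF K] by blast
  qed
  have Gnn: "\<forall>x\<in>{0..1}. ?G x \<ge> 0"
  proof
    fix x :: real assume x: "x \<in> {0..1}"
    have "\<bar>x\<bar> < K" using x K1 by auto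
    moreover have "x \<ge> 0" using x by simp
    ultimately have "S2 \<beta> x \<ge> 0" using S2_nonneg[OF K] by blast
    then show "?G x \<ge> 0" unfolding GS[OF x] .
  qed
  define A where "A = S1 \<beta> 1"
  define B where "B = S1 \<beta> 1 - S0 \<beta> 1"
  have GA: "(?G has_integral A) {0..1}"
    unfolding A_def using S_integrals(1)[OF K K1] has_integral_cong[of "{0..1}" ?G "S2 \<beta>"] GS by simp
  have GB: "((\<lambda>x. ?G x * x) has_integral B) {0..1}"
    unfolding B_def using S_integrals(2)[OF K K1] has_integral_cong[of "{0..1}" "\<lambda>x. ?G x * x" "\<lambda>x. S2 \<beta> x * x"] GS by simp
  have A0: "A \<ge> 0" using has_integral_nonneg[OF GA] Gnn by auto
  have minle: "P0 \<beta> \<phi> \<le> P0 \<beta> \<psi>" if "\<psi> \<in> classC" for \<psi>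
    using min that unfolding is_minimizer_def by blast
  have "\<phi> \<in> classC" using min unfolding is_minimizer_def by blast
  then have "\<phi> 0 \<ge> 0" unfolding classC_def by auto
  then have c0: "c \<ge> 0" using phic by simp
  have cpos: "c > 0"
  proof (rule ccontr)
    assume "\<not> c > 0"
    then have cz: "c = 0" using c0 by simp
    have fe: "(\<lambda>x. (ennreal (?G x * \<phi> x) + (if \<phi> x = 0 then \<infinity> else ennreal (1 / \<phi> x))) * indicator {0..1} x)
          = (\<lambda>x. (top::ennreal) * indicator {0..1} x)"
    proof
      fix x :: real
      show "(ennreal (?G x * \<phi> x) + (if \<phi> x = 0 then \<infinity> else ennreal (1 / \<phi> x))) * indicator {0..1} x
          = (top::ennreal) * indicator {0..1} x"
        using phic cz by (cases "x \<in> {0..1}") auto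
    qed
    have "P0 \<beta> \<phi> = (\<integral>\<^sup>+ x. (top::ennreal) * indicator {0..1::real} x \<partial>lborel)"
      unfolding P0_alt fe ..
    also have "\<dots> = top" by (subst nn_integral_cmult_indicator) auto
    finally have inf: "P0 \<beta> \<phi> = top" .
    have "P0 \<beta> (\<lambda>_. 1) = ennreal (1 * A + 1 / 1)"
      by (rule P0_const[OF _ _ Gnn GA]) auto
    moreover have "P0 \<beta> \<phi> \<le> P0 \<beta> (\<lambda>_. 1)" by (rule minle[OF const_classC]) simp
    ultimately show False using inf by (simp add: top_unique)
  qed
  have Pphi: "P0 \<beta> \<phi> = ennreal (c * A + 1 / c)"
    by (rule P0_const[OF cpos phic Gnn GA])
  have pos: "c * A + 1 / c > 0" using cpos A0 by (simp add: add_nonneg_pos)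
  have L: "c * (\<sigma> * A + \<tau> * B) - (\<sigma> + \<tau> / 2) / c \<ge> 0"
    if st: "\<bar>\<sigma>\<bar> + \<bar>\<tau>\<bar> \<le> 1" and tau: "\<tau> \<le> 0" for \<sigma> \<tau> :: real
  proof (rule small_s[OF cpos])
    fix s :: real assume s: "0 < s" "s \<le> 1/2"
    have eq: "(\<lambda>x. c * (1 + s * (\<sigma> + \<tau> * x))) = (\<lambda>x. c * (1 + s * \<sigma>) + (c * s * \<tau>) * x)"
      by (rule ext) (simp add: algebra_simps)
    have "\<bar>\<sigma> + \<tau>\<bar> \<le> 1" using st by linarith
    then have "\<bar>s\<bar> * \<bar>\<sigma> + \<tau>\<bar> \<le> s * 1" using s by (simp add: mult_left_mono)
    then have "\<bar>s * (\<sigma> + \<tau>)\<bar> \<le> s * 1" by (simp add: abs_mult)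
    then have "- s \<le> s * (\<sigma> + \<tau>)" by (simp add: abs_le_iff)
    then have "1 + s * (\<sigma> + \<tau>) \<ge> 0" using s by linarith
    then have "c * (1 + s * (\<sigma> + \<tau>)) \<ge> 0" using cpos by simp
    moreover have "c * (1 + s * (\<sigma> + \<tau>)) = c * (1 + s * \<sigma>) + c * s * \<tau>" by (simp add: algebra_simps)
    ultimately have "c * (1 + s * \<sigma>) + c * s * \<tau> \<ge> 0" by simp
    moreover have "c * s * \<tau> \<le> 0" using cpos s tau by (simp add: mult_nonneg_nonpos)
    ultimately have inC: "(\<lambda>x. c * (1 + s * (\<sigma> + \<tau> * x))) \<in> classC"
      unfolding eq by (intro affine_classC)
    have "ennreal (c * A + 1 / c) \<le> ennreal (c * A + 1 / c + s * (c * (\<sigma> * A + \<tau> * B) - (\<sigma> + \<tau> / 2) / c) + 2 * s^2 / c)"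
      using minle[OF inC] P0_upper[OF cpos s st Gnn GA GB] Pphi by simp
    then have "c * A + 1 / c \<le> c * A + 1 / c + s * (c * (\<sigma> * A + \<tau> * B) - (\<sigma> + \<tau> / 2) / c) + 2 * s^2 / c"
      using pos by (rule ennreal_le_pos)
    then show "0 \<le> s * (c * (\<sigma> * A + \<tau> * B) - (\<sigma> + \<tau> / 2) / c) + 2 * s^2 / c" by simp
  qed
  have L1: "c * A - 1 / c \<ge> 0" using L[of 1 0] by simp
  have L2: "- c * A + 1 / c \<ge> 0" using L[of "-1" 0] by simp
  have L3: "- c * B + 1 / (2 * c) \<ge> 0" using L[of 0 "-1"] by simp
  have e1: "c * A = 1 / c" using L1 L2 by linarith
  have "c * B \<le> 1 / (2 * c)" using L3 by linarith
  also have "1 / (2 * c) = c * (A / 2)" using e1 by simp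
  finally have "c * B \<le> c * (A / 2)" .
  then have "B \<le> A / 2" using cpos by simp
  then have le: "S1 \<beta> 1 \<le> 2 * S0 \<beta> 1" unfolding A_def B_def by simp
  have z: "\<forall>n\<ge>3. \<beta> n = 0" by (rule final_arith[OF K K1 le])
  have cfz: "cf \<beta> n = 0" if "n \<noteq> 2" for n
    using z that by (cases "n \<ge> 3") (auto simp: cf_def)
  have xi2: "xi \<beta> t = (\<beta> 2)^2 * t^2" for t
  proof -
    have "xi \<beta> t = (\<Sum>n. cf \<beta> n * t^n)" by (simp add: xi_S0 S0_def)
    also have "\<dots> = (\<Sum>n\<in>{2}. cf \<beta> n * t^n)"
      by (rule suminf_finite) (auto simp: cfz)
    also have "\<dots> = (\<beta> 2)^2 * t^2" by (simp add: cf_def)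
    finally show ?thesis .
  qed
  obtain p where p: "p \<ge> 2" "\<beta> p \<noteq> 0" using model unfolding is_model_def by blast
  have "p = 2" using z p by (cases "p \<ge> 3") auto
  then have "(\<beta> 2)^2 > 0" using p by simp
  then show ?thesis using xi2 by blast
qed

lemma backward:
  fixes \<beta> :: "nat \<Rightarrow> real" and \<phi> :: "real \<Rightarrow> real" and a :: real
  assumes uniq: "\<forall>\<psi>. is_minimizer \<beta> \<psi> \<longrightarrow> (\<forall>x\<in>{0..1}. \<psi> x = \<phi> x)"
    and a: "a > 0" and xa: "\<forall>t. xi \<beta> t = a * t^2"
  shows "\<exists>c. \<forall>x\<in>{0..1}. \<phi> x = c"
proof -
  have xie: "xi \<beta> = (\<lambda>t. a * t^2)" using xa by auto
  have d1: "deriv (xi \<beta>) = (\<lambda>t. 2 * a * t)"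
  proof
    fix t :: real
    show "deriv (xi \<beta>) t = 2 * a * t" unfolding xie
      by (rule DERIV_imp_deriv) (auto intro!: derivative_eq_intros)
  qed
  have d2: "deriv (deriv (xi \<beta>)) = (\<lambda>t. 2 * a)"
  proof
    fix t :: real
    show "deriv (deriv (xi \<beta>)) t = 2 * a" unfolding d1
      by (rule DERIV_imp_deriv) (auto intro!: derivative_eq_intros)
  qed
  define c where "c = 1 / sqrt (2 * a)"
  have cpos: "c > 0" using a by (simp add: c_def)
  have sq: "sqrt (2 * a) ^ 2 = 2 * a" using a by simp
  have key: "2 * a * c + 1 / c \<le> 2 * a * y + 1 / y" if y: "y > 0" for y :: real
  proof -
    have lhs: "2 * a * c + 1 / c = 2 * sqrt (2 * a)"
      unfolding c_def using a sq by (simp add: field_simps power2_eq_square)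
    have "0 \<le> (sqrt (2 * a) * y - 1)^2" by simp
    then have "2 * sqrt (2 * a) * y \<le> 2 * a * y^2 + 1"
      using sq by (simp add: power2_eq_square algebra_simps)
    then have "2 * sqrt (2 * a) \<le> (2 * a * y^2 + 1) / y" using y by (simp add: le_divide_eq)
    also have "\<dots> = 2 * a * y + 1 / y" using y by (simp add: field_simps power2_eq_square)
    finally show ?thesis using lhs by simp
  qed
  have "is_minimizer \<beta> (\<lambda>_. c)"
    unfolding is_minimizer_def
  proof (intro conjI ballI)
    show "(\<lambda>_. c) \<in> classC" using cpos by (intro const_classC) simp
    fix \<psi> assume \<psi>: "\<psi> \<in> classC"
    have nn: "\<psi> x \<ge> 0" if "x \<in> {0..1}" for x using \<psi> that unfolding classC_def by auto
    show "P0 \<beta> (\<lambda>_. c) \<le> P0 \<beta> \<psi>"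
      unfolding P0_alt d2
    proof (intro nn_integral_mono)
      fix x :: real
      show "(ennreal (2 * a * c) + (if c = 0 then \<infinity> else ennreal (1 / c))) * indicator {0..1} x
         \<le> (ennreal (2 * a * \<psi> x) + (if \<psi> x = 0 then \<infinity> else ennreal (1 / \<psi> x))) * indicator {0..1} x"
      proof (cases "x \<in> {0..1}")
        case False then show ?thesis by simp
      next
        case True
        show ?thesis
        proof (cases "\<psi> x = 0")
          case True then show ?thesis using \<open>x \<in> {0..1}\<close> cpos by simp
        next
          case False
          then have yp: "\<psi> x > 0" using nn[OF \<open>x \<in> {0..1}\<close>] by simp
          have "ennreal (2 * a * c) + ennreal (1 / c) = ennreal (2 * a * c + 1 / c)"
            using a cpos by (simp add: ennreal_plus)
          also have "\<dots> \<le> ennreal (2 * a * \<psi> x + 1 / \<psi> x)" by (intro ennreal_leI key yp)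
          also have "\<dots> = ennreal (2 * a * \<psi> x) + ennreal (1 / \<psi> x)"
            using a yp by (simp add: ennreal_plus)
          finally show ?thesis using cpos False \<open>x \<in> {0..1}\<close> by simp
        qed
      qed
    qed
  qed
  then have "\<forall>x\<in>{0..1}. c = \<phi> x" using uniq by blast
  then show ?thesis by metis
qed

theorem lemma1p19:
  fixes \<beta> :: "nat \<Rightarrow> real" and \<phi> :: "real \<Rightarrow> real"
  assumes "is_model \<beta>"
    and "is_minimizer \<beta> \<phi>"
    and "\<forall>\<psi>. is_minimizer \<beta> \<psi> \<longrightarrow> (\<forall>x\<in>{0..1}. \<psi> x = \<phi> x)"
  shows "(\<exists>c. \<forall>x\<in>{0..1}. \<phi> x = c) \<longleftrightarrow> (\<exists>a>0. \<forall>t. xi \<beta> t = a * t^2)"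
  using forward[OF assms(1,2)] backward[OF assms(3)] by blast


end
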